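(* Unpruned multiplication is an associative binary operation on $UT^1(\Sigma)$, and the isomorphism type of the trivial tree is an identity element for it. The set $UT(\Sigma)$ of isomorphism types of non-trivial trees is a subsemigroup of $UT^1(\Sigma)$. The maps $X\mapsto X^{(+)}$ and $X\mapsto X^{( * )}$ are idempotent unary operations on $UT^1(\Sigma)$, and the subsemigroup generated by their images is commutative.
   Context: Let $\Sigma$ be a set. A $\Sigma$-tree is a finite directed graph whose underlying undirected graph is a tree, edges labelled by elements of $\Sigma$, with distinguished start and end vertices such that there is a (possibly empty) directed path from the start vertex to the end vertex; it is trivial if it has only one vertex. Isomorphism of $\Sigma$-trees means a label-preserving graph isomorphism preserving start and end vertices. $UT^1(\Sigma)$ is the set of isomorphism types of $\Sigma$-trees. Unpruned multiplication: $X\times Y$ is obtained from disjoint representatives of $X$ and $Y$ by identifying the end vertex of $X$ with the start vertex of $Y$, with start vertex that of $X$ and end vertex that of $Y$. $X^{(+)}$ is the tree with the same graph and start vertex as $X$ but with end vertex equal to the start vertex; $X^{( * )}$ has the same graph and end vertex as $X$ but start vertex equal to the end vertex. *)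

theory Defs
  imports Main
begin

text \<open>A Sigma-tree, with labels of type 's (the alphabet Sigma is the type 's).
  Vertices are natural numbers (every finite tree has such a representative).
  An edge is a triple (source, label, target).\<close>

record 's stree =
  verts :: "nat set"
  edges :: "(nat \<times> 's \<times> nat) set"
  st :: nat
  en :: nat

definition joins :: "(nat \<times> 's \<times> nat) \<Rightarrow> nat \<Rightarrow> nat \<Rightarrow> bool" where
  "joins e u v \<longleftrightarrow> (fst e = u \<and> snd (snd e) = v) \<or> (fst e = v \<and> snd (snd e) = u)"

definition uadj :: "(nat \<times> 's \<times> nat) set \<Rightarrow> (nat \<times> nat) set" where
  "uadj E = {(u, v). \<exists>a. (u, a, v) \<in> E \<or> (v, a, u) \<in> E}"

definition dadj :: "(nat \<times> 's \<times> nat) set \<Rightarrow> (nat \<times> nat) set" where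
  "dadj E = {(u, v). \<exists>a. (u, a, v) \<in> E}"

text \<open>An (undirected) cycle in the underlying multigraph: k \<ge> 1 distinct edges
  and k distinct vertices v_0..v_{k-1}, edge i joining v_i and v_{(i+1) mod k}
  (this includes loops, k = 1, and pairs of parallel edges, k = 2).\<close>
definition has_ucycle :: "(nat \<times> 's \<times> nat) set \<Rightarrow> bool" where
  "has_ucycle E \<longleftrightarrow> (\<exists>vs es. length vs = length es \<and> length es \<ge> 1 \<and>
      distinct vs \<and> distinct es \<and> set es \<subseteq> E \<and>
      (\<forall>i < length es. joins (es ! i) (vs ! i) (vs ! ((i + 1) mod length es))))"

definition is_utree :: "nat set \<Rightarrow> (nat \<times> 's \<times> nat) set \<Rightarrow> bool" where
  "is_utree V E \<longleftrightarrow> finite V \<and> finite E \<and> V \<noteq> {} \<and>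
     (\<forall>(u, a, v) \<in> E. u \<in> V \<and> v \<in> V) \<and>
     (\<forall>u \<in> V. \<forall>v \<in> V. (u, v) \<in> (uadj E)\<^sup>*) \<and>
     \<not> has_ucycle E"

definition is_tree :: "'s stree \<Rightarrow> bool" where
  "is_tree X \<longleftrightarrow> is_utree (verts X) (edges X) \<and> st X \<in> verts X \<and> en X \<in> verts X \<and>
     (st X, en X) \<in> (dadj (edges X))\<^sup>*"

definition trivial_tree :: "'s stree \<Rightarrow> bool" where
  "trivial_tree X \<longleftrightarrow> card (verts X) = 1"

definition tree_iso :: "'s stree \<Rightarrow> 's stree \<Rightarrow> bool" where
  "tree_iso X Y \<longleftrightarrow> (\<exists>f. bij_betw f (verts X) (verts Y) \<and>
     edges Y = (\<lambda>(u, a, v). (f u, a, f v)) ` edges X \<and>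
     f (st X) = st Y \<and> f (en X) = en Y)"

definition tclass :: "'s stree \<Rightarrow> 's stree set" where
  "tclass X = {Y. is_tree Y \<and> tree_iso X Y}"

definition UT1 :: "'s stree set set" where
  "UT1 = {tclass X | X. is_tree X}"

definition UT :: "'s stree set set" where
  "UT = {tclass X | X. is_tree X \<and> \<not> trivial_tree X}"

definition triv_tree :: "'s stree" where
  "triv_tree = \<lparr>verts = {0}, edges = {}, st = 0, en = 0\<rparr>"

text \<open>Unpruned product of concrete trees: X is relabelled by v \<mapsto> 2v, Y by v \<mapsto> 2v+1
  (making them disjoint), and the start vertex of Y is identified with the end of X.\<close>
definition glueY :: "'s stree \<Rightarrow> 's stree \<Rightarrow> nat \<Rightarrow> nat" where
  "glueY X Y v = (if v = st Y then 2 * en X else 2 * v + 1)"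

definition tmult :: "'s stree \<Rightarrow> 's stree \<Rightarrow> 's stree" where
  "tmult X Y = \<lparr>verts = (\<lambda>v. 2 * v) ` verts X \<union> glueY X Y ` verts Y,
     edges = (\<lambda>(u, a, v). (2 * u, a, 2 * v)) ` edges X
             \<union> (\<lambda>(u, a, v). (glueY X Y u, a, glueY X Y v)) ` edges Y,
     st = 2 * st X, en = glueY X Y (en Y)\<rparr>"

definition tplus :: "'s stree \<Rightarrow> 's stree" where
  "tplus X = X\<lparr>en := st X\<rparr>"

definition tstar :: "'s stree \<Rightarrow> 's stree" where
  "tstar X = X\<lparr>st := en X\<rparr>"

definition cmult :: "'s stree set \<Rightarrow> 's stree set \<Rightarrow> 's stree set" where
  "cmult A B = tclass (tmult (SOME X. X \<in> A) (SOME Y. Y \<in> B))"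

definition cplus :: "'s stree set \<Rightarrow> 's stree set" where
  "cplus A = tclass (tplus (SOME X. X \<in> A))"

definition cstar :: "'s stree set \<Rightarrow> 's stree set" where
  "cstar A = tclass (tstar (SOME X. X \<in> A))"

inductive_set gen_subsemigroup :: "'s stree set set \<Rightarrow> 's stree set set"
  for S :: "'s stree set set" where
  base: "A \<in> S \<Longrightarrow> A \<in> gen_subsemigroup S"
| mult: "A \<in> gen_subsemigroup S \<Longrightarrow> B \<in> gen_subsemigroup S \<Longrightarrow>
         cmult A B \<in> gen_subsemigroup S"

end

theory Submission
  imports Defs
begin


definition emap :: "(nat \<Rightarrow> nat) \<Rightarrow> (nat \<times> 's \<times> nat) set \<Rightarrow> (nat \<times> 's \<times> nat) set" where
  "emap f E = (\<lambda>(u, a, v). (f u, a, f v)) ` E"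

definition ewf :: "'s stree \<Rightarrow> bool" where
  "ewf X \<longleftrightarrow> (\<forall>(u, a, v) \<in> edges X. u \<in> verts X \<and> v \<in> verts X) \<and> st X \<in> verts X \<and> en X \<in> verts X"

lemma emap_comp: "emap f (emap g E) = emap (\<lambda>x. f (g x)) E"
  unfolding emap_def image_image by (simp add: split_def)

lemma emap_id: "emap (\<lambda>x. x) E = E"
  unfolding emap_def by auto

lemma emap_cong: "(\<And>u a v. (u, a, v) \<in> E \<Longrightarrow> f u = g u \<and> f v = g v) \<Longrightarrow> emap f E = emap g E"
  unfolding emap_def by (force intro!: image_cong)

lemma emap_Un: "emap f (A \<union> B) = emap f A \<union> emap f B" unfolding emap_def by (rule image_Un)
lemma emap_empty[simp]: "emap f {} = {}" unfolding emap_def by auto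
lemma emap_mem: "(u,a,v) \<in> E \<Longrightarrow> (f u, a, f v) \<in> emap f E" unfolding emap_def by force
lemma emap_memE: "e \<in> emap f E \<Longrightarrow> (\<And>u a v. e = (f u, a, f v) \<Longrightarrow> (u,a,v) \<in> E \<Longrightarrow> P) \<Longrightarrow> P"
  unfolding emap_def by auto
lemma finite_emap: "finite E \<Longrightarrow> finite (emap f E)" unfolding emap_def by simp

lemma tmult_simps:
  "verts (tmult X Y) = (\<lambda>v. 2 * v) ` verts X \<union> glueY X Y ` verts Y"
  "edges (tmult X Y) = emap (\<lambda>v. 2 * v) (edges X) \<union> emap (glueY X Y) (edges Y)"
  "st (tmult X Y) = 2 * st X"
  "en (tmult X Y) = glueY X Y (en Y)"
  by (simp_all add: tmult_def emap_def)

lemma tree_iso_emap: "tree_iso X Y \<longleftrightarrow> (\<exists>f. bij_betw f (verts X) (verts Y) \<and> edges Y = emap f (edges X) \<and> f (st X) = st Y \<and> f (en X) = en Y)"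
  by (simp add: tree_iso_def emap_def)

lemma iso_intro:
  assumes "inj_on f (verts X)" "verts Y = f ` verts X" "edges Y = emap f (edges X)" "f (st X) = st Y" "f (en X) = en Y"
  shows "tree_iso X Y"
  using assms unfolding tree_iso_emap bij_betw_def by blast

lemma iso_trans: assumes "tree_iso X Y" "tree_iso Y Z" shows "tree_iso X Z"
proof -
  obtain f where f: "bij_betw f (verts X) (verts Y)" "edges Y = emap f (edges X)" "f (st X) = st Y" "f (en X) = en Y"
    using assms(1) unfolding tree_iso_emap by blast
  obtain g where g: "bij_betw g (verts Y) (verts Z)" "edges Z = emap g (edges Y)" "g (st Y) = st Z" "g (en Y) = en Z"
    using assms(2) unfolding tree_iso_emap by blast
  have "bij_betw (\<lambda>x. g (f x)) (verts X) (verts Z)" using bij_betw_trans[OF f(1) g(1)] by (simp add: o_def)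
  moreover have "edges Z = emap (\<lambda>x. g (f x)) (edges X)" using f(2) g(2) by (simp add: emap_comp)
  ultimately show ?thesis unfolding tree_iso_emap using f g by auto
qed

lemma iso_sym: assumes "tree_iso X Y" "ewf X" shows "tree_iso Y X"
proof -
  from assms(1) obtain f where f: "bij_betw f (verts X) (verts Y)" "edges Y = emap f (edges X)" "f (st X) = st Y" "f (en X) = en Y"
    unfolding tree_iso_emap by blast
  define g where "g = inv_into (verts X) f"
  have bg: "bij_betw g (verts Y) (verts X)" using f(1) g_def by (simp add: bij_betw_inv_into)
  have gf: "g (f x) = x" if "x \<in> verts X" for x using f(1) that g_def by (simp add: bij_betw_inv_into_left)
  have "emap g (edges Y) = emap (\<lambda>x. g (f x)) (edges X)" using f(2) by (simp add: emap_comp)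
  also have "\<dots> = emap (\<lambda>x. x) (edges X)" apply (rule emap_cong) using assms(2) gf unfolding ewf_def by fastforce
  finally have "edges X = emap g (edges Y)" by (simp add: emap_id)
  moreover have "g (st Y) = st X" "g (en Y) = en X" using gf[of "st X"] gf[of "en X"] f(3,4) assms(2) unfolding ewf_def by auto
  ultimately show ?thesis using bg unfolding tree_iso_emap by blast
qed

lemma iso_refl: "tree_iso X X"
  by (rule iso_intro[where f="\<lambda>x. x"]) (simp_all add: emap_id)

lemma tclass_eq: "tree_iso X Y \<Longrightarrow> ewf X \<Longrightarrow> tclass X = tclass Y"
  unfolding tclass_def using iso_trans iso_sym by blast

lemma tree_ewf: "is_tree X \<Longrightarrow> ewf X"
  by (auto simp: is_tree_def is_utree_def ewf_def)

lemma ewf_tmult: "ewf X \<Longrightarrow> ewf Y \<Longrightarrow> ewf (tmult X Y)"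
  unfolding ewf_def tmult_simps by (auto elim!: emap_memE)

lemma tclass_mem: "is_tree X \<Longrightarrow> X \<in> tclass X"
  by (simp add: tclass_def iso_refl)

lemma some_tclass: "is_tree X \<Longrightarrow> is_tree (SOME Z. Z \<in> tclass X) \<and> tree_iso X (SOME Z. Z \<in> tclass X)"
  using someI[of "\<lambda>Z. Z \<in> tclass X", OF tclass_mem] unfolding tclass_def by blast

lemma inj_glueY: "inj (glueY X Y)"
  unfolding inj_def glueY_def by presburger

lemma inj_on_two:
  assumes "inj_on (\<lambda>x. h (a x)) A" "inj_on (\<lambda>x. h (b x)) B"
    "\<And>x y. x \<in> A \<Longrightarrow> y \<in> B \<Longrightarrow> h (a x) = h (b y) \<Longrightarrow> a x = b y"
  shows "inj_on h (a ` A \<union> b ` B)"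
  using assms unfolding inj_on_def by (smt (verit) UnE imageE)



lemma joins_in: "joins e u v \<Longrightarrow> e \<in> E \<Longrightarrow> \<forall>(p,a,q)\<in>E. p\<in>A \<and> q\<in>A \<Longrightarrow> u\<in>A \<and> v\<in>A"
  unfolding joins_def by (cases e) auto

lemma joins_map: "joins e u v \<Longrightarrow> joins ((\<lambda>(p,a,q). (h p, a, h q)) e) (h u) (h v)"
  by (cases e) (auto simp: joins_def)

lemma cyc_transition:
  assumes "P a" "\<not> P b" "a < k" "b < k"
  shows "\<exists>i<k. P i \<and> \<not> P (Suc i mod k)"
proof (rule ccontr)
  assume H: "\<not> ?thesis"
  have "P ((a + d) mod k)" for d
  proof (induction d)
    case 0 then show ?case using assms by simp
  next
    case (Suc d)
    have "(a + Suc d) mod k = Suc ((a + d) mod k) mod k" by (simp add: mod_Suc_eq)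
    moreover have "(a+d) mod k < k" using assms by simp
    ultimately show ?case using H Suc by auto
  qed
  from this[of "b + k - a"] have "P ((b + k) mod k)" using assms by simp
  then show False using assms by simp
qed

lemma suc_mod_inj: "i < k \<Longrightarrow> j < k \<Longrightarrow> Suc i mod k = Suc j mod k \<Longrightarrow> i = j"
  by (auto simp: mod_Suc split: if_splits)

lemma cycle_split:
  assumes cyc: "has_ucycle (E1 \<union> E2)"
    and A: "\<forall>(u,a,v)\<in>E1. u\<in>A \<and> v\<in>A" and B: "\<forall>(u,a,v)\<in>E2. u\<in>B \<and> v\<in>B"
    and AB: "A \<inter> B \<subseteq> {c}"
  shows "has_ucycle E1 \<or> has_ucycle E2"
proof (rule ccontr)
  assume nc: "\<not> ?thesis"
  from cyc obtain vs es where H: "length vs = length es" "length es \<ge> 1" "distinct vs" "distinct es"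
    "set es \<subseteq> E1 \<union> E2" "\<forall>i<length es. joins (es!i) (vs!i) (vs!((i+1) mod length es))"
    unfolding has_ucycle_def by blast
  define k where "k = length es"
  have "\<not> set es \<subseteq> E1" using nc H unfolding has_ucycle_def by blast
  then obtain a where a: "a < k" "es!a \<notin> E1" unfolding k_def by (metis in_set_conv_nth subsetI)
  have "\<not> set es \<subseteq> E2" using nc H unfolding has_ucycle_def by blast
  then obtain b where b: "b < k" "es!b \<notin> E2" unfolding k_def by (metis in_set_conv_nth subsetI)
  have mem: "i < k \<Longrightarrow> es!i \<in> E1 \<union> E2" for i using H(5) k_def nth_mem by blast
  have bE1: "es!b \<in> E1" using mem[OF b(1)] b(2) by blast
  define P where "P i \<longleftrightarrow> es!i \<in> E1" for i
  obtain i where i: "i<k" "P i" "\<not>P(Suc i mod k)" using cyc_transition[of P b a k] a b bE1 P_def by blast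
  obtain j where j: "j<k" "\<not>P j" "P(Suc j mod k)" using cyc_transition[of "\<lambda>i. \<not>P i" a b k] a b bE1 P_def by blast
  have kpos: "0 < k" using H k_def by linarith
  have J: "joins (es!i) (vs!i) (vs!(Suc i mod k))" if "i < k" for i using H(6) that k_def by simp
  have vA: "vs!(Suc i mod k) \<in> A" if "i < k" "es!i \<in> E1" for i using joins_in[OF J[OF that(1)] that(2) A] by blast
  have vA2: "vs!i \<in> A" if "i < k" "es!i \<in> E1" for i using joins_in[OF J[OF that(1)] that(2) A] by blast
  have vB: "vs!(Suc i mod k) \<in> B" if "i < k" "es!i \<in> E2" for i using joins_in[OF J[OF that(1)] that(2) B] by blast
  have vB2: "vs!i \<in> B" if "i < k" "es!i \<in> E2" for i using joins_in[OF J[OF that(1)] that(2) B] by blast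
  have si: "Suc i mod k < k" "Suc j mod k < k" using kpos by auto
  have c1: "vs!(Suc i mod k) = c"
  proof -
    have "es!(Suc i mod k) \<in> E2" using mem[OF si(1)] i P_def by blast
    then have "vs!(Suc i mod k) \<in> B" using vB2 si by blast
    moreover have "vs!(Suc i mod k) \<in> A" using vA i P_def by blast
    ultimately show ?thesis using AB by blast
  qed
  have c2: "vs!(Suc j mod k) = c"
  proof -
    have "es!j \<in> E2" using mem[OF j(1)] j P_def by blast
    then have "vs!(Suc j mod k) \<in> B" using vB j by blast
    moreover have "vs!(Suc j mod k) \<in> A" using vA2 si j P_def by blast
    ultimately show ?thesis using AB by blast
  qed
  have "Suc i mod k = Suc j mod k"
    using c1 c2 H(1,3) si k_def nth_eq_iff_index_eq by metis
  then have "i = j" using suc_mod_inj i j by blast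
  then show False using i j by blast
qed

lemma cycle_pull:
  fixes E :: "(nat \<times> 's \<times> nat) set"
  assumes cyc: "has_ucycle (emap f E)" and inj: "inj_on f V" and wf: "\<forall>(u,a,v)\<in>E. u\<in>V \<and> v\<in>V"
  shows "has_ucycle E"
proof -
  from cyc obtain vs es where H: "length vs = length es" "length es \<ge> 1" "distinct vs" "distinct es"
    "set es \<subseteq> emap f E" "\<forall>i<length es. joins (es!i) (vs!i) (vs!((i+1) mod length es))"
    unfolding has_ucycle_def by blast
  define g where "g = inv_into V f"
  define m where "m = (\<lambda>(u::nat,a::'s,v::nat). (g u, a, g v))"
  define mf where "mf = (\<lambda>(u::nat,a::'s,v::nat). (f u, a, f v))"
  have gf: "g (f x) = x" if "x \<in> V" for x using inj that g_def by simp
  have bk: "m e \<in> E \<and> mf (m e) = e" if "e \<in> emap f E" for e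
    using that
  proof (rule emap_memE)
    fix u a v assume "e = (f u, a, f v)" "(u, a, v) \<in> E"
    then show ?thesis using gf wf unfolding m_def mf_def by auto
  qed
  have wfi: "\<forall>(p,a,q)\<in>emap f E. p \<in> f ` V \<and> q \<in> f ` V"
    using wf by (auto elim!: emap_memE)
  have vsV: "set vs \<subseteq> f ` V"
  proof
    fix x assume "x \<in> set vs"
    then obtain i where "i < length vs" "x = vs!i" by (auto simp: in_set_conv_nth)
    then have "i < length es" "es!i \<in> emap f E" using H by auto
    then show "x \<in> f ` V" using joins_in[OF _ _ wfi, of "es!i" "vs!i"] H \<open>x = vs!i\<close> by blast
  qed
  show ?thesis unfolding has_ucycle_def
  proof (intro exI conjI)
    show "length (map g vs) = length (map m es)" using H by simp
    show "1 \<le> length (map m es)" using H by simp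
    show "distinct (map g vs)" using H(3) vsV g_def by (simp add: distinct_map inj_on_inv_into)
    have "inj_on m (set es)" by (rule inj_on_inverseI[where g=mf]) (use bk H(5) in blast)
    then show "distinct (map m es)" using H(4) by (simp add: distinct_map)
    show "set (map m es) \<subseteq> E" using bk H(5) by auto
    show "\<forall>i<length (map m es). joins (map m es ! i) (map g vs ! i) (map g vs ! ((i + 1) mod length (map m es)))"
    proof (intro allI impI)
      fix i assume "i < length (map m es)"
      then have "i < length es" by simp
      then have "0 < length es" by linarith
      then have "(i+1) mod length es < length vs" using H(1) by simp
      then show "joins (map m es ! i) (map g vs ! i) (map g vs ! ((i + 1) mod length (map m es)))"
        using joins_map[of "es!i" "vs!i" "vs!((i+1) mod length es)" g] H(1,6) \<open>i < length es\<close> unfolding m_def by simp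
    qed
  qed
qed

lemma uadj_map: "(u,v) \<in> (uadj E)\<^sup>* \<Longrightarrow> (f u, f v) \<in> (uadj (emap f E))\<^sup>*"
proof (induction rule: rtrancl_induct)
  case base then show ?case by simp
next
  case (step y z)
  have "(f y, f z) \<in> uadj (emap f E)" using step(2) unfolding uadj_def by (auto intro: emap_mem)
  then show ?case using step(3) by (rule rtrancl_into_rtrancl[rotated])
qed

lemma dadj_map: "(u,v) \<in> (dadj E)\<^sup>* \<Longrightarrow> (f u, f v) \<in> (dadj (emap f E))\<^sup>*"
proof (induction rule: rtrancl_induct)
  case base then show ?case by simp
next
  case (step y z)
  have "(f y, f z) \<in> dadj (emap f E)" using step(2) unfolding dadj_def by (auto intro: emap_mem)
  then show ?case using step(3) by (rule rtrancl_into_rtrancl[rotated])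
qed

lemma uadj_mono: "E \<subseteq> F \<Longrightarrow> (uadj E)\<^sup>* \<subseteq> (uadj F)\<^sup>*"
  by (rule rtrancl_mono) (auto simp: uadj_def)

lemma dadj_mono: "E \<subseteq> F \<Longrightarrow> (dadj E)\<^sup>* \<subseteq> (dadj F)\<^sup>*"
  by (rule rtrancl_mono) (auto simp: dadj_def)



lemma glue_even: "2 * a = glueY X Y b \<Longrightarrow> b = st Y"
proof (rule ccontr)
  assume "2 * a = glueY X Y b" "b \<noteq> st Y"
  then have "2 * a = 2 * b + 1" by (simp add: glueY_def)
  then show False by presburger
qed

lemma is_tree_tmult:
  assumes X: "is_tree X" and Y: "is_tree Y"
  shows "is_tree (tmult X Y)"
proof -
  let ?d = "\<lambda>v::nat. 2 * v"
  let ?g = "glueY X Y"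
  let ?E1 = "emap ?d (edges X)" and ?E2 = "emap ?g (edges Y)"
  let ?c = "2 * en X"
  from X have fX: "finite (verts X)" "finite (edges X)" "verts X \<noteq> {}"
    and wX: "\<forall>(u, a, v) \<in> edges X. u \<in> verts X \<and> v \<in> verts X"
    and cX: "\<forall>u \<in> verts X. \<forall>v \<in> verts X. (u, v) \<in> (uadj (edges X))\<^sup>*"
    and nX: "\<not> has_ucycle (edges X)"
    and sX: "st X \<in> verts X" "en X \<in> verts X" "(st X, en X) \<in> (dadj (edges X))\<^sup>*"
    unfolding is_tree_def is_utree_def by blast+
  from Y have fY: "finite (verts Y)" "finite (edges Y)" "verts Y \<noteq> {}"
    and wY: "\<forall>(u, a, v) \<in> edges Y. u \<in> verts Y \<and> v \<in> verts Y"
    and cY: "\<forall>u \<in> verts Y. \<forall>v \<in> verts Y. (u, v) \<in> (uadj (edges Y))\<^sup>*"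
    and nY: "\<not> has_ucycle (edges Y)"
    and sY: "st Y \<in> verts Y" "en Y \<in> verts Y" "(st Y, en Y) \<in> (dadj (edges Y))\<^sup>*"
    unfolding is_tree_def is_utree_def by blast+
  have gst: "?g (st Y) = ?c" by (simp add: glueY_def)
  have E: "edges (tmult X Y) = ?E1 \<union> ?E2" by (simp add: tmult_simps)
  have V: "verts (tmult X Y) = ?d ` verts X \<union> ?g ` verts Y" by (simp add: tmult_simps)
  have w1: "\<forall>(u, a, v) \<in> ?E1. u \<in> ?d ` verts X \<and> v \<in> ?d ` verts X"
    using wX by (auto elim!: emap_memE)
  have w2: "\<forall>(u, a, v) \<in> ?E2. u \<in> ?g ` verts Y \<and> v \<in> ?g ` verts Y"
    using wY by (auto elim!: emap_memE)
  have AB: "?d ` verts X \<inter> ?g ` verts Y \<subseteq> {?c}"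
  proof
    fix w assume "w \<in> ?d ` verts X \<inter> ?g ` verts Y"
    then obtain x y where "w = 2 * x" "w = ?g y" by blast
    then have "y = st Y" using glue_even by metis
    then show "w \<in> {?c}" using \<open>w = ?g y\<close> gst by simp
  qed
  have nc: "\<not> has_ucycle (edges (tmult X Y))"
  proof
    assume "has_ucycle (edges (tmult X Y))"
    then have "has_ucycle ?E1 \<or> has_ucycle ?E2" unfolding E by (rule cycle_split[OF _ w1 w2 AB])
    moreover have "\<not> has_ucycle ?E1"
      using cycle_pull[of ?d "edges X" UNIV] nX by (auto simp: inj_on_def)
    moreover have "\<not> has_ucycle ?E2"
      using cycle_pull[of ?g "edges Y" UNIV] nY inj_glueY by auto
    ultimately show False by blast
  qed
  let ?R = "(uadj (edges (tmult X Y)))\<^sup>*"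
  have m1: "(uadj ?E1)\<^sup>* \<subseteq> ?R" unfolding E by (rule uadj_mono) blast
  have m2: "(uadj ?E2)\<^sup>* \<subseteq> ?R" unfolding E by (rule uadj_mono) blast
  have toc: "(w, ?c) \<in> ?R \<and> (?c, w) \<in> ?R" if "w \<in> verts (tmult X Y)" for w
  proof -
    from that V consider x where "x \<in> verts X" "w = 2 * x" | y where "y \<in> verts Y" "w = ?g y" by auto
    then show ?thesis
    proof cases
      case 1
      then show ?thesis using uadj_map[of x "en X" "edges X" ?d] uadj_map[of "en X" x "edges X" ?d] cX sX m1 by auto
    next
      case 2
      then show ?thesis using uadj_map[of y "st Y" "edges Y" ?g] uadj_map[of "st Y" y "edges Y" ?g] cY sY m2 gst by auto
    qed
  qed
  have conn: "\<forall>u \<in> verts (tmult X Y). \<forall>v \<in> verts (tmult X Y). (u, v) \<in> ?R"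
    using toc by (meson rtrancl_trans)
  have path: "(st (tmult X Y), en (tmult X Y)) \<in> (dadj (edges (tmult X Y)))\<^sup>*"
  proof -
    have "(2 * st X, ?c) \<in> (dadj (edges (tmult X Y)))\<^sup>*"
      using dadj_map[OF sX(3), of ?d] dadj_mono[of ?E1 "edges (tmult X Y)"] E by auto
    moreover have "(?c, ?g (en Y)) \<in> (dadj (edges (tmult X Y)))\<^sup>*"
      using dadj_map[OF sY(3), of ?g] dadj_mono[of ?E2 "edges (tmult X Y)"] E gst by auto
    ultimately show ?thesis by (simp add: tmult_simps)
  qed
  have fin: "finite (verts (tmult X Y))" "finite (edges (tmult X Y))"
    using fX fY by (simp_all add: tmult_simps finite_emap)
  have ne: "verts (tmult X Y) \<noteq> {}" using fX(3) unfolding V by blast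
  have wT: "\<forall>(u, a, v) \<in> edges (tmult X Y). u \<in> verts (tmult X Y) \<and> v \<in> verts (tmult X Y)"
  proof (intro ballI, clarify)
    fix u a v assume "(u, a, v) \<in> edges (tmult X Y)"
    then have "(u, a, v) \<in> ?E1 \<or> (u, a, v) \<in> ?E2" unfolding E by blast
    then show "u \<in> verts (tmult X Y) \<and> v \<in> verts (tmult X Y)"
    proof
      assume "(u, a, v) \<in> ?E1" then show ?thesis using w1 unfolding V by blast
    next
      assume "(u, a, v) \<in> ?E2" then show ?thesis using w2 unfolding V by blast
    qed
  qed
  have se: "st (tmult X Y) \<in> verts (tmult X Y)" "en (tmult X Y) \<in> verts (tmult X Y)"
    using sX sY by (auto simp: tmult_simps)
  show ?thesis unfolding is_tree_def is_utree_def
    using fin ne wT conn nc se path by (intro conjI) assumption+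
qed

lemma nontriv_tmult:
  assumes X: "is_tree X" "\<not> trivial_tree X" and Y: "is_tree Y"
  shows "\<not> trivial_tree (tmult X Y)"
proof -
  have f: "finite (verts X)" "verts X \<noteq> {}" "finite (verts Y)" using X Y by (auto simp: is_tree_def is_utree_def)
  then have "card (verts X) > 0" by (simp add: card_gt_0_iff)
  then have "card (verts X) \<ge> 2" using X(2) unfolding trivial_tree_def by linarith
  moreover have "card ((\<lambda>v::nat. 2 * v) ` verts X) = card (verts X)"
    by (rule card_image) (auto simp: inj_on_def)
  moreover have "card ((\<lambda>v::nat. 2 * v) ` verts X) \<le> card (verts (tmult X Y))"
    using f by (intro card_mono) (auto simp: tmult_simps)
  ultimately show ?thesis unfolding trivial_tree_def by linarith
qed

lemma tmult_iso:
  assumes "tree_iso X X'" "tree_iso Y Y'" "ewf X" "ewf Y"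
  shows "tree_iso (tmult X Y) (tmult X' Y')"
proof -
  obtain f where f: "bij_betw f (verts X) (verts X')" "edges X' = emap f (edges X)" "f (st X) = st X'" "f (en X) = en X'"
    using assms(1) unfolding tree_iso_emap by blast
  obtain g where g: "bij_betw g (verts Y) (verts Y')" "edges Y' = emap g (edges Y)" "g (st Y) = st Y'" "g (en Y) = en Y'"
    using assms(2) unfolding tree_iso_emap by blast
  define h where "h n = (if even n then 2 * f (n div 2) else glueY X' Y' (g ((n - 1) div 2)))" for n
  have h1: "h (2 * x) = 2 * f x" for x by (simp add: h_def)
  have h2: "h (glueY X Y y) = glueY X' Y' (g y)" for y
    using f(4) g(3) by (simp add: h_def glueY_def)
  have inj: "inj_on h (verts (tmult X Y))"
    unfolding tmult_simps
  proof (rule inj_on_two)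
    have fi: "inj_on f (verts X)" using f(1) by (simp add: bij_betw_def)
    then show "inj_on (\<lambda>x. h (2 * x)) (verts X)" unfolding h1 inj_on_def by simp
    have gi: "inj_on g (verts Y)" using g(1) by (simp add: bij_betw_def)
    then show "inj_on (\<lambda>x. h (glueY X Y x)) (verts Y)" unfolding h2 inj_on_def
      using injD[OF inj_glueY[of X' Y']] by blast
    fix x y assume xy: "x \<in> verts X" "y \<in> verts Y" "h (2 * x) = h (glueY X Y y)"
    then have e: "2 * f x = glueY X' Y' (g y)" by (simp add: h1 h2)
    then have "g y = st Y'" by (rule glue_even)
    then have "y = st Y" using g(1) g(3) xy(2) assms(4) unfolding ewf_def bij_betw_def inj_on_def by metis
    moreover then have "f x = en X'" using e \<open>g y = st Y'\<close> by (simp add: glueY_def)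
    then have "x = en X" using f(1) f(4) xy(1) assms(3) unfolding ewf_def bij_betw_def inj_on_def by metis
    ultimately show "2 * x = glueY X Y y" by (simp add: glueY_def)
  qed
  have vX': "verts X' = f ` verts X" and vY': "verts Y' = g ` verts Y"
    using f(1) g(1) by (simp_all add: bij_betw_def)
  show ?thesis
  proof (rule iso_intro[OF inj])
    show "verts (tmult X' Y') = h ` verts (tmult X Y)"
      unfolding tmult_simps vX' vY' image_Un image_image h1 h2 by simp
    show "edges (tmult X' Y') = emap h (edges (tmult X Y))"
      unfolding tmult_simps emap_Un emap_comp h1 h2 f(2) g(2) by simp
    show "h (st (tmult X Y)) = st (tmult X' Y')" by (simp add: tmult_simps h1 f(3))
    show "h (en (tmult X Y)) = en (tmult X' Y')" by (simp add: tmult_simps h2 g(4))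
  qed
qed

lemma odd_ne_even: "2 * z + 1 \<noteq> 2 * (w::nat)" by presburger

definition af :: "nat \<Rightarrow> nat" where
  "af n = (if even n then (if even (n div 2) then n div 2 else n - 1) else 2 * n + 1)"
definition ag :: "nat \<Rightarrow> nat" where
  "ag m = (if odd m then (if even (m div 2) then m + 1 else m div 2) else 2 * m)"

lemma af_a: "af (2 * (2 * x)) = 2 * x" by (simp add: af_def)
lemma af_b: "af (2 * (2 * y + 1)) = 2 * (2 * y) + 1" by (simp add: af_def)
lemma af_c: "af (2 * z + 1) = 2 * (2 * z + 1) + 1" by (simp add: af_def)

lemma ag_af: "ag (af n) = n"
proof (cases "even n")
  case True
  then obtain k where k: "n = 2 * k" by blast
  show ?thesis
  proof (cases "even k")
    case True
    then obtain j where "k = 2 * j" by blast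
    then show ?thesis using k af_a by (simp add: ag_def)
  next
    case False
    then obtain j where "k = 2 * j + 1" using oddE by blast
    then have "af n = 2 * (2 * j) + 1" using k af_b by simp
    moreover have "ag (2 * (2 * j) + 1) = 2 * (2 * j + 1)" by (simp add: ag_def)
    ultimately show ?thesis using k \<open>k = 2 * j + 1\<close> by simp
  qed
next
  case False
  then obtain k where k: "n = 2 * k + 1" using oddE by blast
  then have "af n = 2 * (2 * k + 1) + 1" using af_c by simp
  moreover have "ag (2 * (2 * k + 1) + 1) = 2 * k + 1" by (simp add: ag_def)
  ultimately show ?thesis using k by simp
qed

lemma assoc_iso:
  shows "tree_iso (tmult (tmult X Y) Z) (tmult X (tmult Y Z))"
proof -
  define f where "f = af"
  have inj: "inj f" unfolding f_def by (rule inj_on_inverseI, rule ag_af)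
  have fa: "f (2 * (2 * x)) = 2 * x" for x unfolding f_def by (rule af_a)
  have fb: "f (2 * (2 * y + 1)) = 2 * (2 * y) + 1" for y unfolding f_def by (rule af_b)
  have fc: "f (2 * z + 1) = 2 * (2 * z + 1) + 1" for z unfolding f_def by (rule af_c)
  have p2: "f (2 * glueY X Y y) = glueY X (tmult Y Z) (2 * y)" for y
  proof (cases "y = st Y")
    case True then show ?thesis using fa by (simp add: glueY_def tmult_simps)
  next
    case False then show ?thesis using fb by (simp add: glueY_def tmult_simps)
  qed
  have p3: "f (glueY (tmult X Y) Z z) = glueY X (tmult Y Z) (glueY Y Z z)" for z
  proof (cases "z = st Z")
    case True
    then have "glueY (tmult X Y) Z z = 2 * glueY X Y (en Y)" by (simp add: glueY_def tmult_simps)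
    moreover have "glueY Y Z z = 2 * en Y" using True by (simp add: glueY_def)
    ultimately show ?thesis using p2 by simp
  next
    case False
    then have "glueY (tmult X Y) Z z = 2 * z + 1" "glueY Y Z z = 2 * z + 1" by (simp_all add: glueY_def)
    moreover have "glueY X (tmult Y Z) (2 * z + 1) = 2 * (2 * z + 1) + 1"
      unfolding glueY_def tmult_simps using odd_ne_even by simp
    ultimately show ?thesis using fc by simp
  qed
  show ?thesis
  proof (rule iso_intro[where f=f])
    show "inj_on f (verts (tmult (tmult X Y) Z))" using inj by (simp add: inj_on_def inj_def)
    show "verts (tmult X (tmult Y Z)) = f ` verts (tmult (tmult X Y) Z)"
      unfolding tmult_simps image_Un image_image fa p2 p3 by blast
    show "edges (tmult X (tmult Y Z)) = emap f (edges (tmult (tmult X Y) Z))"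
      unfolding tmult_simps emap_Un emap_comp fa p2 p3 by blast
    show "f (st (tmult (tmult X Y) Z)) = st (tmult X (tmult Y Z))"
      unfolding tmult_simps fa by simp
    show "f (en (tmult (tmult X Y) Z)) = en (tmult X (tmult Y Z))"
      unfolding tmult_simps p3 by simp
  qed
qed

lemma comm_iso:
  assumes "st X = en X" "st Y = en Y"
  shows "tree_iso (tmult X Y) (tmult Y X)"
proof -
  define f :: "nat \<Rightarrow> nat" where "f n = (if even n then glueY Y X (n div 2) else 2 * (n div 2))" for n
  have p1: "f (2 * x) = glueY Y X x" for x unfolding f_def by simp
  have p2: "f (glueY X Y y) = 2 * y" for y
    using assms unfolding f_def glueY_def by auto
  have inj: "inj_on f (verts (tmult X Y))"
    unfolding tmult_simps
  proof (rule inj_on_two)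
    show "inj_on (\<lambda>x. f (2 * x)) (verts X)" unfolding p1 using inj_glueY by (metis inj_on_subset subset_UNIV)
    show "inj_on (\<lambda>x. f (glueY X Y x)) (verts Y)" unfolding p2 by (simp add: inj_on_def)
    fix x y assume "x \<in> verts X" "y \<in> verts Y" "f (2 * x) = f (glueY X Y y)"
    then have e: "glueY Y X x = 2 * y" by (simp add: p1 p2)
    then have "x = st X" using glue_even by metis
    then show "2 * x = glueY X Y y" using e assms by (simp add: glueY_def)
  qed
  show ?thesis
  proof (rule iso_intro[OF inj])
    show "verts (tmult Y X) = f ` verts (tmult X Y)"
      unfolding tmult_simps image_Un image_image p1 p2 by blast
    show "edges (tmult Y X) = emap f (edges (tmult X Y))"
      unfolding tmult_simps emap_Un emap_comp p1 p2 by blast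
    show "f (st (tmult X Y)) = st (tmult Y X)" using assms by (simp add: tmult_simps p1 glueY_def)
    show "f (en (tmult X Y)) = en (tmult Y X)" unfolding tmult_simps p2 using assms by (simp add: glueY_def)
  qed
qed



lemma lid_iso: assumes "ewf X" shows "tree_iso X (tmult triv_tree X)"
proof (rule iso_intro[where f="glueY triv_tree X"])
  show "inj_on (glueY triv_tree X) (verts X)" using inj_glueY by (metis inj_on_subset subset_UNIV)
  have "glueY triv_tree X (st X) = 0" by (simp add: glueY_def triv_tree_def)
  then show "verts (tmult triv_tree X) = glueY triv_tree X ` verts X"
    using assms unfolding tmult_simps ewf_def by (auto simp: triv_tree_def)
  show "edges (tmult triv_tree X) = emap (glueY triv_tree X) (edges X)"
    unfolding tmult_simps by (simp add: triv_tree_def)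
  show "glueY triv_tree X (st X) = st (tmult triv_tree X)"
    unfolding tmult_simps by (simp add: triv_tree_def glueY_def)
  show "glueY triv_tree X (en X) = en (tmult triv_tree X)"
    unfolding tmult_simps by simp
qed

lemma rid_iso: assumes "ewf X" shows "tree_iso X (tmult X triv_tree)"
proof (rule iso_intro[where f="\<lambda>v. 2 * v"])
  show "inj_on (\<lambda>v::nat. 2 * v) (verts X)" by (simp add: inj_on_def)
  show "verts (tmult X triv_tree) = (\<lambda>v. 2 * v) ` verts X"
    using assms unfolding tmult_simps ewf_def by (auto simp: triv_tree_def glueY_def)
  show "edges (tmult X triv_tree) = emap (\<lambda>v. 2 * v) (edges X)"
    unfolding tmult_simps by (simp add: triv_tree_def)
  show "2 * st X = st (tmult X triv_tree)" unfolding tmult_simps by simp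
  show "2 * en X = en (tmult X triv_tree)" unfolding tmult_simps by (simp add: triv_tree_def glueY_def)
qed

lemma triv_is_tree: "is_tree triv_tree"
  unfolding is_tree_def is_utree_def triv_tree_def has_ucycle_def by auto

lemma tplus_tree: "is_tree X \<Longrightarrow> is_tree (tplus X)"
  unfolding is_tree_def tplus_def by simp

lemma tstar_tree: "is_tree X \<Longrightarrow> is_tree (tstar X)"
  unfolding is_tree_def tstar_def by simp

lemma tplus_iso: "tree_iso X Y \<Longrightarrow> tree_iso (tplus X) (tplus Y)"
  unfolding tree_iso_def tplus_def by auto

lemma tstar_iso: "tree_iso X Y \<Longrightarrow> tree_iso (tstar X) (tstar Y)"
  unfolding tree_iso_def tstar_def by auto

lemma cmult_tclass: assumes "is_tree X" "is_tree Y"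
  shows "cmult (tclass X) (tclass Y) = tclass (tmult X Y)"
proof -
  define X' where "X' = (SOME Z. Z \<in> tclass X)"
  define Y' where "Y' = (SOME Z. Z \<in> tclass Y)"
  have x: "is_tree X'" "tree_iso X X'" using some_tclass[OF assms(1)] X'_def by auto
  have y: "is_tree Y'" "tree_iso Y Y'" using some_tclass[OF assms(2)] Y'_def by auto
  have "tree_iso (tmult X Y) (tmult X' Y')"
    using tmult_iso[OF x(2) y(2)] tree_ewf assms by blast
  then have "tclass (tmult X Y) = tclass (tmult X' Y')"
    using tclass_eq ewf_tmult tree_ewf assms by blast
  then show ?thesis unfolding cmult_def X'_def Y'_def by simp
qed

lemma cplus_tclass: assumes "is_tree X" shows "cplus (tclass X) = tclass (tplus X)"
proof -
  define X' where "X' = (SOME Z. Z \<in> tclass X)"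
  have x: "is_tree X'" "tree_iso X X'" using some_tclass[OF assms(1)] X'_def by auto
  have "ewf (tplus X)" using tree_ewf[OF tplus_tree[OF assms]] .
  then have "tclass (tplus X) = tclass (tplus X')" using tclass_eq tplus_iso[OF x(2)] by blast
  then show ?thesis unfolding cplus_def X'_def by simp
qed

lemma cstar_tclass: assumes "is_tree X" shows "cstar (tclass X) = tclass (tstar X)"
proof -
  define X' where "X' = (SOME Z. Z \<in> tclass X)"
  have x: "is_tree X'" "tree_iso X X'" using some_tclass[OF assms(1)] X'_def by auto
  have "ewf (tstar X)" using tree_ewf[OF tstar_tree[OF assms]] .
  then have "tclass (tstar X) = tclass (tstar X')" using tclass_eq tstar_iso[OF x(2)] by blast
  then show ?thesis unfolding cstar_def X'_def by simp
qed

lemma UT1E: "A \<in> UT1 \<Longrightarrow> (\<And>X. is_tree X \<Longrightarrow> A = tclass X \<Longrightarrow> P) \<Longrightarrow> P"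
  unfolding UT1_def by blast

lemma gen_loop:
  assumes "A \<in> gen_subsemigroup (cplus ` (UT1 :: 's stree set set) \<union> cstar ` UT1)"
  shows "\<exists>X :: 's stree. is_tree X \<and> st X = en X \<and> A = tclass X"
  using assms
proof (induction rule: gen_subsemigroup.induct)
  case (base A)
  then show ?case
  proof
    assume "A \<in> cplus ` UT1"
    then obtain B where "B \<in> UT1" "A = cplus B" by blast
    then obtain X where "is_tree X" "B = tclass X" by (auto elim: UT1E)
    moreover have "st (tplus X) = en (tplus X)" by (simp add: tplus_def)
    ultimately show ?thesis using \<open>A = cplus B\<close> cplus_tclass tplus_tree by blast
  next
    assume "A \<in> cstar ` UT1"
    then obtain B where "B \<in> UT1" "A = cstar B" by blast
    then obtain X where "is_tree X" "B = tclass X" by (auto elim: UT1E)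
    moreover have "st (tstar X) = en (tstar X)" by (simp add: tstar_def)
    ultimately show ?thesis using \<open>A = cstar B\<close> cstar_tclass tstar_tree by blast
  qed
next
  case (mult A B)
  then obtain X Y where "is_tree X" "st X = en X" "A = tclass X" "is_tree Y" "st Y = en Y" "B = tclass Y" by blast
  moreover have "st (tmult X Y) = en (tmult X Y)" using \<open>st X = en X\<close> \<open>st Y = en Y\<close>
    by (simp add: tmult_simps glueY_def)
  ultimately show ?case using cmult_tclass is_tree_tmult by metis
qed

theorem proposition4p2:
  shows
    "(\<forall>X Y :: 's stree. is_tree X \<longrightarrow> is_tree Y \<longrightarrow>
        cmult (tclass X) (tclass Y) = tclass (tmult X Y)) \<and>
     (\<forall>X :: 's stree. is_tree X \<longrightarrow> cplus (tclass X) = tclass (tplus X)) \<and>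
     (\<forall>X :: 's stree. is_tree X \<longrightarrow> cstar (tclass X) = tclass (tstar X)) \<and>
     (\<forall>A \<in> (UT1 :: 's stree set set). \<forall>B \<in> UT1. cmult A B \<in> UT1) \<and>
     (\<forall>A \<in> (UT1 :: 's stree set set). \<forall>B \<in> UT1. \<forall>C \<in> UT1.
        cmult (cmult A B) C = cmult A (cmult B C)) \<and>
     tclass (triv_tree :: 's stree) \<in> UT1 \<and>
     (\<forall>A \<in> (UT1 :: 's stree set set).
        cmult (tclass triv_tree) A = A \<and> cmult A (tclass triv_tree) = A) \<and>
     (UT :: 's stree set set) \<subseteq> UT1 \<and>
     (\<forall>A \<in> (UT :: 's stree set set). \<forall>B \<in> UT. cmult A B \<in> UT) \<and>
     (\<forall>A \<in> (UT1 :: 's stree set set). cplus A \<in> UT1 \<and> cplus (cplus A) = cplus A) \<and>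
     (\<forall>A \<in> (UT1 :: 's stree set set). cstar A \<in> UT1 \<and> cstar (cstar A) = cstar A) \<and>
     (\<forall>A \<in> gen_subsemigroup (cplus ` (UT1 :: 's stree set set) \<union> cstar ` UT1).
        \<forall>B \<in> gen_subsemigroup (cplus ` (UT1 :: 's stree set set) \<union> cstar ` UT1).
          cmult A B = cmult B A)"
proof (intro conjI)
  show "\<forall>X Y :: 's stree. is_tree X \<longrightarrow> is_tree Y \<longrightarrow>
        cmult (tclass X) (tclass Y) = tclass (tmult X Y)" using cmult_tclass by blast
  show "\<forall>X :: 's stree. is_tree X \<longrightarrow> cplus (tclass X) = tclass (tplus X)" using cplus_tclass by blast
  show "\<forall>X :: 's stree. is_tree X \<longrightarrow> cstar (tclass X) = tclass (tstar X)" using cstar_tclass by blast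
  show "\<forall>A \<in> (UT1 :: 's stree set set). \<forall>B \<in> UT1. cmult A B \<in> UT1"
  proof (intro ballI)
    fix A B :: "'s stree set" assume "A \<in> UT1" "B \<in> UT1"
    then obtain X Y where "is_tree X" "A = tclass X" "is_tree Y" "B = tclass Y" by (metis UT1E)
    then show "cmult A B \<in> UT1" using cmult_tclass is_tree_tmult unfolding UT1_def by blast
  qed
  show "\<forall>A \<in> (UT1 :: 's stree set set). \<forall>B \<in> UT1. \<forall>C \<in> UT1.
        cmult (cmult A B) C = cmult A (cmult B C)"
  proof (intro ballI)
    fix A B C :: "'s stree set" assume "A \<in> UT1" "B \<in> UT1" "C \<in> UT1"
    then obtain X Y Z where t: "is_tree X" "is_tree Y" "is_tree Z" and e: "A = tclass X" "B = tclass Y" "C = tclass Z"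
      by (metis UT1E)
    have "cmult (cmult A B) C = tclass (tmult (tmult X Y) Z)"
      using e t cmult_tclass is_tree_tmult by metis
    also have "\<dots> = tclass (tmult X (tmult Y Z))"
      using tclass_eq[OF assoc_iso] ewf_tmult tree_ewf t by blast
    also have "\<dots> = cmult A (cmult B C)"
      using e t cmult_tclass is_tree_tmult by metis
    finally show "cmult (cmult A B) C = cmult A (cmult B C)" .
  qed
  show "tclass (triv_tree :: 's stree) \<in> UT1" using triv_is_tree unfolding UT1_def by blast
  show "\<forall>A \<in> (UT1 :: 's stree set set).
        cmult (tclass triv_tree) A = A \<and> cmult A (tclass triv_tree) = A"
  proof
    fix A :: "'s stree set" assume "A \<in> UT1"
    then obtain X where t: "is_tree X" and e: "A = tclass X" by (metis UT1E)
    have "cmult (tclass triv_tree) A = tclass (tmult triv_tree X)" using cmult_tclass triv_is_tree t e by blast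
    also have "\<dots> = A" using tclass_eq[OF lid_iso] tree_ewf t e by metis
    finally have 1: "cmult (tclass triv_tree) A = A" .
    have "cmult A (tclass triv_tree) = tclass (tmult X triv_tree)" using cmult_tclass triv_is_tree t e by blast
    also have "\<dots> = A" using tclass_eq[OF rid_iso] tree_ewf t e by metis
    finally show "cmult (tclass triv_tree) A = A \<and> cmult A (tclass triv_tree) = A" using 1 by blast
  qed
  show "(UT :: 's stree set set) \<subseteq> UT1" unfolding UT_def UT1_def by blast
  show "\<forall>A \<in> (UT :: 's stree set set). \<forall>B \<in> UT. cmult A B \<in> UT"
  proof (intro ballI)
    fix A B :: "'s stree set" assume "A \<in> UT" "B \<in> UT"
    then obtain X Y where "is_tree X" "\<not> trivial_tree X" "A = tclass X" "is_tree Y" "B = tclass Y"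
      unfolding UT_def by blast
    then show "cmult A B \<in> UT" using cmult_tclass is_tree_tmult nontriv_tmult unfolding UT_def by blast
  qed
  show "\<forall>A \<in> (UT1 :: 's stree set set). cplus A \<in> UT1 \<and> cplus (cplus A) = cplus A"
  proof
    fix A :: "'s stree set" assume "A \<in> UT1"
    then obtain X where t: "is_tree X" and e: "A = tclass X" by (metis UT1E)
    have c: "cplus A = tclass (tplus X)" using cplus_tclass t e by blast
    moreover have "tplus (tplus X) = tplus X" by (simp add: tplus_def)
    ultimately show "cplus A \<in> UT1 \<and> cplus (cplus A) = cplus A"
      using cplus_tclass[OF tplus_tree[OF t]] tplus_tree[OF t] unfolding UT1_def by auto
  qed
  show "\<forall>A \<in> (UT1 :: 's stree set set). cstar A \<in> UT1 \<and> cstar (cstar A) = cstar A"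
  proof
    fix A :: "'s stree set" assume "A \<in> UT1"
    then obtain X where t: "is_tree X" and e: "A = tclass X" by (metis UT1E)
    have c: "cstar A = tclass (tstar X)" using cstar_tclass t e by blast
    moreover have "tstar (tstar X) = tstar X" by (simp add: tstar_def)
    ultimately show "cstar A \<in> UT1 \<and> cstar (cstar A) = cstar A"
      using cstar_tclass[OF tstar_tree[OF t]] tstar_tree[OF t] unfolding UT1_def by auto
  qed
  show "\<forall>A \<in> gen_subsemigroup (cplus ` (UT1 :: 's stree set set) \<union> cstar ` UT1).
        \<forall>B \<in> gen_subsemigroup (cplus ` (UT1 :: 's stree set set) \<union> cstar ` UT1).
          cmult A B = cmult B A"
  proof (intro ballI)
    fix A B assume "A \<in> gen_subsemigroup (cplus ` (UT1 :: 's stree set set) \<union> cstar ` UT1)"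
      "B \<in> gen_subsemigroup (cplus ` (UT1 :: 's stree set set) \<union> cstar ` UT1)"
    then obtain X Y :: "'s stree" where t: "is_tree X" "st X = en X" "A = tclass X" "is_tree Y" "st Y = en Y" "B = tclass Y"
      using gen_loop by metis
    have "cmult A B = tclass (tmult X Y)" using cmult_tclass t by blast
    also have "\<dots> = tclass (tmult Y X)" using tclass_eq[OF comm_iso] ewf_tmult tree_ewf t by blast
    also have "\<dots> = cmult B A" using cmult_tclass t by blast
    finally show "cmult A B = cmult B A" .
  qed
qed

end
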